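(* Let $\mathbb O=\{-1,0,1\}$ and $\theta=0$. If $x(0)\in\mathbb O^n$ has no coordinate equal to $0$, then there exists a finite legal update sequence from $x(0)$ leading the system either to a consensus state $(z,\dots,z)$ with $z\neq0$ or to a non-consensus equilibrium.
   Context: Let $n\ge1$, $\mathcal V=\{1,\dots,n\}$, and let $W=(w_{ij})$ be an $n\times n$ row-stochastic matrix. For $x\in\mathbb O^n$, $i\in\mathcal V$, $z\in\mathbb O$, define $C^i_{\mathrm{social}}(z;x)=\sum_{j=1}^n w_{ij}|z-x_j|$ and $P_i(x)=\{z\in\mathbb O: C^i_{\mathrm{social}}(z;x)\le C^i_{\mathrm{social}}(x_i;x),\ |z-\theta|\le |x_i-\theta|\}$. A legal update sequence from $x(0)$ is a finite sequence $(i_1,z_1),\dots,(i_T,z_T)$ with $i_t\in\mathcal V$, generating $x(1),\dots,x(T)$ where $x(t)$ is obtained from $x(t-1)$ by setting coordinate $i_t$ to $z_t$, such that $z_t\in P_{i_t}(x(t-1))$ for every $t$. An equilibrium is a state $x^*$ with $P_i(x^* )=\{x_i^*\}$ for all $i\in\mathcal V$; it is non-consensus if not all coordinates are equal. *)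

theory Defs
  imports Complex_Main
begin

text \<open>Opinion set O = {-1,0,1}; agents V = {1..n}; states are functions nat => int,
  only coordinates in {1..n} are meaningful.\<close>

definition Opn :: "int set" where
  "Opn = {-1, 0, 1}"

definition row_stochastic :: "nat \<Rightarrow> (nat \<Rightarrow> nat \<Rightarrow> real) \<Rightarrow> bool" where
  "row_stochastic n W \<longleftrightarrow>
     (\<forall>i\<in>{1..n}. (\<forall>j\<in>{1..n}. 0 \<le> W i j) \<and> (\<Sum>j\<in>{1..n}. W i j) = 1)"

definition C_social :: "nat \<Rightarrow> (nat \<Rightarrow> nat \<Rightarrow> real) \<Rightarrow> nat \<Rightarrow> int \<Rightarrow> (nat \<Rightarrow> int) \<Rightarrow> real" where
  "C_social n W i z x = (\<Sum>j\<in>{1..n}. W i j * \<bar>real_of_int (z - x j)\<bar>)"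

definition P_set :: "nat \<Rightarrow> (nat \<Rightarrow> nat \<Rightarrow> real) \<Rightarrow> int \<Rightarrow> nat \<Rightarrow> (nat \<Rightarrow> int) \<Rightarrow> int set" where
  "P_set n W \<theta> i x = {z \<in> Opn. C_social n W i z x \<le> C_social n W i (x i) x
                                  \<and> \<bar>z - \<theta>\<bar> \<le> \<bar>x i - \<theta>\<bar>}"

fun legal_seq :: "nat \<Rightarrow> (nat \<Rightarrow> nat \<Rightarrow> real) \<Rightarrow> int \<Rightarrow> (nat \<Rightarrow> int) \<Rightarrow> (nat \<times> int) list \<Rightarrow> bool" where
  "legal_seq n W \<theta> x [] = True"
| "legal_seq n W \<theta> x ((i, z) # rest) =
     (i \<in> {1..n} \<and> z \<in> P_set n W \<theta> i x \<and> legal_seq n W \<theta> (x(i := z)) rest)"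

fun apply_seq :: "(nat \<Rightarrow> int) \<Rightarrow> (nat \<times> int) list \<Rightarrow> (nat \<Rightarrow> int)" where
  "apply_seq x [] = x"
| "apply_seq x ((i, z) # rest) = apply_seq (x(i := z)) rest"

definition equilibrium :: "nat \<Rightarrow> (nat \<Rightarrow> nat \<Rightarrow> real) \<Rightarrow> int \<Rightarrow> (nat \<Rightarrow> int) \<Rightarrow> bool" where
  "equilibrium n W \<theta> x \<longleftrightarrow> (\<forall>i\<in>{1..n}. P_set n W \<theta> i x = {x i})"

definition consensus :: "nat \<Rightarrow> (nat \<Rightarrow> int) \<Rightarrow> bool" where
  "consensus n x \<longleftrightarrow> (\<forall>i\<in>{1..n}. \<forall>j\<in>{1..n}. x i = x j)"

end

theory Submission
  imports Defs
begin

definition ov :: "nat \<Rightarrow> (nat \<Rightarrow> int) \<Rightarrow> bool" where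
  "ov n x \<longleftrightarrow> (\<forall>i\<in>{1..n}. x i = 1 \<or> x i = -1 \<or> x i = 0)"

definition pm :: "nat \<Rightarrow> (nat \<Rightarrow> int) \<Rightarrow> bool" where
  "pm n x \<longleftrightarrow> (\<forall>i\<in>{1..n}. x i = 1 \<or> x i = -1)"

definition Ap :: "nat \<Rightarrow> (nat \<Rightarrow> nat \<Rightarrow> real) \<Rightarrow> (nat \<Rightarrow> int) \<Rightarrow> nat \<Rightarrow> real" where
  "Ap n W x i = (\<Sum>j\<in>{1..n}. W i j * (if x j = 1 then 1 else 0))"

definition Bm :: "nat \<Rightarrow> (nat \<Rightarrow> nat \<Rightarrow> real) \<Rightarrow> (nat \<Rightarrow> int) \<Rightarrow> nat \<Rightarrow> real" where
  "Bm n W x i = (\<Sum>j\<in>{1..n}. W i j * (if x j = -1 then 1 else 0))"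

definition Cz :: "nat \<Rightarrow> (nat \<Rightarrow> nat \<Rightarrow> real) \<Rightarrow> (nat \<Rightarrow> int) \<Rightarrow> nat \<Rightarrow> real" where
  "Cz n W x i = (\<Sum>j\<in>{1..n}. W i j * (if x j = 0 then 1 else 0))"

lemma legal_append:
  "legal_seq n W t x (us @ vs) = (legal_seq n W t x us \<and> legal_seq n W t (apply_seq x us) vs)"
  by (induction us arbitrary: x) auto

lemma apply_append:
  "apply_seq x (us @ vs) = apply_seq (apply_seq x us) vs"
  by (induction us arbitrary: x) auto

lemma pm_ov: "pm n x \<Longrightarrow> ov n x"
  unfolding pm_def ov_def by auto

lemma C_one:
  assumes "ov n x"
  shows "C_social n W i 1 x = 2 * Bm n W x i + Cz n W x i"
proof -
  have "2 * Bm n W x i + Cz n W x i =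
    (\<Sum>j\<in>{1..n}. W i j * (if x j = -1 then 2 else 0) + W i j * (if x j = 0 then 1 else 0))"
    unfolding Bm_def Cz_def sum_distrib_left sum.distrib by (rule arg_cong2[where f="(+)"]; rule sum.cong; auto)
  also have "\<dots> = C_social n W i 1 x"
    unfolding C_social_def
  proof (rule sum.cong)
    fix j assume "j \<in> {1..n}"
    then have "x j = 1 \<or> x j = -1 \<or> x j = 0" using assms ov_def by auto
    then show "W i j * (if x j = -1 then 2 else 0) + W i j * (if x j = 0 then 1 else 0) =
       W i j * \<bar>real_of_int (1 - x j)\<bar>" by auto
  qed simp
  finally show ?thesis by simp
qed

lemma C_mone:
  assumes "ov n x"
  shows "C_social n W i (-1) x = 2 * Ap n W x i + Cz n W x i"
proof -
  have "2 * Ap n W x i + Cz n W x i =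
    (\<Sum>j\<in>{1..n}. W i j * (if x j = 1 then 2 else 0) + W i j * (if x j = 0 then 1 else 0))"
    unfolding Ap_def Cz_def sum_distrib_left sum.distrib by (rule arg_cong2[where f="(+)"]; rule sum.cong; auto)
  also have "\<dots> = C_social n W i (-1) x"
    unfolding C_social_def
  proof (rule sum.cong)
    fix j assume "j \<in> {1..n}"
    then have "x j = 1 \<or> x j = -1 \<or> x j = 0" using assms ov_def by auto
    then show "W i j * (if x j = 1 then 2 else 0) + W i j * (if x j = 0 then 1 else 0) =
       W i j * \<bar>real_of_int (-1 - x j)\<bar>" by auto
  qed simp
  finally show ?thesis by simp
qed

lemma C_zero:
  assumes "ov n x"
  shows "C_social n W i 0 x = Ap n W x i + Bm n W x i"
proof -
  have "Ap n W x i + Bm n W x i =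
    (\<Sum>j\<in>{1..n}. W i j * (if x j = 1 then 1 else 0) + W i j * (if x j = -1 then 1 else 0))"
    unfolding Ap_def Bm_def sum.distrib by simp
  also have "\<dots> = C_social n W i 0 x"
    unfolding C_social_def
  proof (rule sum.cong)
    fix j assume "j \<in> {1..n}"
    then have "x j = 1 \<or> x j = -1 \<or> x j = 0" using assms ov_def by auto
    then show "W i j * (if x j = 1 then 1 else 0) + W i j * (if x j = -1 then 1 else 0) =
       W i j * \<bar>real_of_int (0 - x j)\<bar>" by auto
  qed simp
  finally show ?thesis by simp
qed

lemma Ap_mono:
  assumes "row_stochastic n W" "i \<in> {1..n}" "\<forall>j\<in>{1..n}. x j = 1 \<longrightarrow> y j = 1"
  shows "Ap n W x i \<le> Ap n W y i"
  unfolding Ap_def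
proof (rule sum_mono)
  fix j assume j: "j \<in> {1..n}"
  then have "0 \<le> W i j" using assms unfolding row_stochastic_def by auto
  then show "W i j * (if x j = 1 then 1 else 0) \<le> W i j * (if y j = 1 then 1 else 0)"
    using assms(3) j by auto
qed

lemma Bm_mono:
  assumes "row_stochastic n W" "i \<in> {1..n}" "\<forall>j\<in>{1..n}. y j = -1 \<longrightarrow> x j = -1"
  shows "Bm n W y i \<le> Bm n W x i"
  unfolding Bm_def
proof (rule sum_mono)
  fix j assume j: "j \<in> {1..n}"
  then have "0 \<le> W i j" using assms unfolding row_stochastic_def by auto
  then show "W i j * (if y j = -1 then 1 else 0) \<le> W i j * (if x j = -1 then 1 else 0)"
    using assms(3) j by auto
qed

lemma Cz_nonneg:
  assumes "row_stochastic n W" "i \<in> {1..n}"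
  shows "0 \<le> Cz n W x i"
  unfolding Cz_def using assms unfolding row_stochastic_def by (intro sum_nonneg) auto

lemma BC_mono:
  assumes "row_stochastic n W" "i \<in> {1..n}" "ov n x" "ov n y" "\<forall>j\<in>{1..n}. x j = 1 \<longrightarrow> y j = 1"
  shows "Bm n W y i + Cz n W y i \<le> Bm n W x i + Cz n W x i"
  unfolding Bm_def Cz_def sum.distrib[symmetric]
proof (rule sum_mono)
  fix j assume j: "j \<in> {1..n}"
  then have "0 \<le> W i j" using assms unfolding row_stochastic_def by auto
  moreover have "x j = 1 \<or> x j = -1 \<or> x j = 0" "y j = 1 \<or> y j = -1 \<or> y j = 0"
    using assms(3,4) j unfolding ov_def by auto
  ultimately show "W i j * (if y j = -1 then 1 else 0) + W i j * (if y j = 0 then 1 else 0) \<le>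
      W i j * (if x j = -1 then 1 else 0) + W i j * (if x j = 0 then 1 else 0)"
    using assms(5) j by auto
qed

lemma Cz_pm: "pm n x \<Longrightarrow> Cz n W x i = 0"
  unfolding Cz_def pm_def by (intro sum.neutral) auto

lemma Opn_mem: "(1::int) \<in> Opn" "(-1::int) \<in> Opn" "(0::int) \<in> Opn"
  by (auto simp: Opn_def)

lemma card_less_aux:
  assumes "(i::nat) \<in> {1..n}" "x i = v" "y i \<noteq> v" "\<forall>j. j \<noteq> i \<longrightarrow> y j = x j"
  shows "card {j\<in>{1..n}. y j = v} < card {j\<in>{1..n}. x j = (v::int)}"
proof -
  have "{j\<in>{1..n}. y j = v} = {j\<in>{1..n}. x j = v} - {i}" using assms by auto
  moreover have "finite {j\<in>{1..n}. x j = v}"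
  proof -
    have "{j\<in>{1..n}. x j = v} \<subseteq> {1..n}" by auto
    then show ?thesis by (rule finite_subset) simp
  qed
  moreover have "i \<in> {j\<in>{1..n}. x j = v}" using assms by auto
  ultimately show ?thesis by (metis card_Diff1_less)
qed

lemma phase1:
  assumes rs: "row_stochastic n W"
  shows "pm n x \<Longrightarrow> \<exists>us. legal_seq n W 0 x us \<and> pm n (apply_seq x us) \<and>
     (\<forall>i\<in>{1..n}. apply_seq x us i = 1 \<longrightarrow> Ap n W (apply_seq x us) i > Bm n W (apply_seq x us) i + Cz n W (apply_seq x us) i)"
proof (induction "card {i\<in>{1..n}. x i = 1}" arbitrary: x rule: less_induct)
  case less
  show ?case
  proof (cases "\<forall>i\<in>{1..n}. x i = 1 \<longrightarrow> Ap n W x i > Bm n W x i + Cz n W x i")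
    case True
    then show ?thesis using less.prems by (intro exI[of _ "[]"]) auto
  next
    case False
    then obtain i where i: "i \<in> {1..n}" "x i = 1" "Ap n W x i \<le> Bm n W x i + Cz n W x i" by force
    have ovx: "ov n x" using less.prems by (rule pm_ov)
    have "Cz n W x i = 0" using Cz_pm[OF less.prems] .
    then have P: "-1 \<in> P_set n W 0 i x"
      unfolding P_set_def using C_one[OF ovx, of W i] C_mone[OF ovx, of W i] i
      by (auto simp: Opn_mem)
    let ?x = "x(i := -1)"
    have pm': "pm n ?x" using less.prems unfolding pm_def by auto
    have "card {j\<in>{1..n}. ?x j = 1} < card {j\<in>{1..n}. x j = 1}"
      by (rule card_less_aux[where i=i and v=1]) (use i in auto)
    from less.hyps[OF this pm'] obtain us where
      us: "legal_seq n W 0 ?x us" "pm n (apply_seq ?x us)"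
        "\<forall>j\<in>{1..n}. apply_seq ?x us j = 1 \<longrightarrow> Ap n W (apply_seq ?x us) j > Bm n W (apply_seq ?x us) j + Cz n W (apply_seq ?x us) j" by blast
    have "legal_seq n W 0 x ((i, -1) # us)" using us(1) i(1) P by simp
    then show ?thesis using us(2,3) by (intro exI[of _ "(i, -1) # us"]) simp
  qed
qed

lemma phase2:
  assumes rs: "row_stochastic n W"
  shows "ov n x \<Longrightarrow> (\<forall>i\<in>{1..n}. x i = 1 \<longrightarrow> Ap n W x i > Bm n W x i + Cz n W x i) \<Longrightarrow>
     \<exists>us. legal_seq n W 0 x us \<and> ov n (apply_seq x us) \<and>
     (\<forall>i\<in>{1..n}. x i = 1 \<longrightarrow> apply_seq x us i = 1) \<and>
     (\<forall>i\<in>{1..n}. apply_seq x us i = 1 \<longrightarrow> Ap n W (apply_seq x us) i > Bm n W (apply_seq x us) i + Cz n W (apply_seq x us) i) \<and>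
     (\<forall>i\<in>{1..n}. apply_seq x us i = -1 \<longrightarrow> Ap n W (apply_seq x us) i + Cz n W (apply_seq x us) i < Bm n W (apply_seq x us) i)"
proof (induction "card {i\<in>{1..n}. x i = -1}" arbitrary: x rule: less_induct)
  case less
  show ?case
  proof (cases "\<forall>i\<in>{1..n}. x i = -1 \<longrightarrow> Ap n W x i + Cz n W x i < Bm n W x i")
    case True
    then show ?thesis using less.prems by (intro exI[of _ "[]"]) auto
  next
    case False
    then obtain i where i: "i \<in> {1..n}" "x i = -1" "Ap n W x i + Cz n W x i \<ge> Bm n W x i" by force
    define v where "v = (if Ap n W x i > Bm n W x i + Cz n W x i then (1::int) else 0)"
    have v: "v \<noteq> -1" "v = 1 \<or> v = 0" by (auto simp: v_def)
    have cz: "0 \<le> Cz n W x i" using Cz_nonneg[OF rs i(1)] .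
    have P: "v \<in> P_set n W 0 i x"
      unfolding P_set_def using C_one[OF less.prems(1), of W i] C_mone[OF less.prems(1), of W i]
        C_zero[OF less.prems(1), of W i] i cz
      by (auto simp: Opn_mem v_def)
    let ?x = "x(i := v)"
    have ov': "ov n ?x" using less.prems(1) v unfolding ov_def by auto
    have A: "Ap n W x j \<le> Ap n W ?x j" if "j \<in> {1..n}" for j
      by (rule Ap_mono[OF rs that]) (use i in auto)
    have B: "Bm n W ?x j + Cz n W ?x j \<le> Bm n W x j + Cz n W x j" if "j \<in> {1..n}" for j
      by (rule BC_mono[OF rs that less.prems(1) ov']) (use i in auto)
    have st': "\<forall>j\<in>{1..n}. ?x j = 1 \<longrightarrow> Ap n W ?x j > Bm n W ?x j + Cz n W ?x j"
    proof (intro ballI impI)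
      fix j assume j: "j \<in> {1..n}" "?x j = 1"
      show "Ap n W ?x j > Bm n W ?x j + Cz n W ?x j"
      proof (cases "j = i")
        case True
        then have "v = 1" using j by simp
        then have "Ap n W x i > Bm n W x i + Cz n W x i" using v_def by (auto split: if_splits)
        then show ?thesis unfolding True using A[OF i(1)] B[OF i(1)] by linarith
      next
        case False
        then have "x j = 1" using j by auto
        then have "Ap n W x j > Bm n W x j + Cz n W x j" using less.prems(2) j by auto
        then show ?thesis using A[OF j(1)] B[OF j(1)] by linarith
      qed
    qed
    have "card {j\<in>{1..n}. ?x j = -1} < card {j\<in>{1..n}. x j = -1}"
      by (rule card_less_aux[where i=i and v="-1"]) (use i v in auto)
    from less.hyps[OF this ov' st'] obtain us where
      us: "legal_seq n W 0 ?x us" "ov n (apply_seq ?x us)"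
        "\<forall>j\<in>{1..n}. ?x j = 1 \<longrightarrow> apply_seq ?x us j = 1"
        "\<forall>j\<in>{1..n}. apply_seq ?x us j = 1 \<longrightarrow> Ap n W (apply_seq ?x us) j > Bm n W (apply_seq ?x us) j + Cz n W (apply_seq ?x us) j"
        "\<forall>j\<in>{1..n}. apply_seq ?x us j = -1 \<longrightarrow> Ap n W (apply_seq ?x us) j + Cz n W (apply_seq ?x us) j < Bm n W (apply_seq ?x us) j"
      by blast
    have "legal_seq n W 0 x ((i, v) # us)" using us(1) i(1) P by simp
    moreover have "\<forall>j\<in>{1..n}. x j = 1 \<longrightarrow> apply_seq x ((i, v) # us) j = 1"
    proof (intro ballI impI)
      fix j assume j: "j \<in> {1..n}" "x j = 1"
      then have "j \<noteq> i" using i(2) by auto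
      then have "?x j = 1" using j by simp
      then show "apply_seq x ((i, v) # us) j = 1" using us(3) j by simp
    qed
    ultimately show ?thesis using us(2,4,5) by (intro exI[of _ "(i, v) # us"]) simp
  qed
qed

lemma final_eq:
  assumes rs: "row_stochastic n W" and ov: "ov n y"
    and s1: "\<forall>i\<in>{1..n}. y i = 1 \<longrightarrow> Ap n W y i > Bm n W y i + Cz n W y i"
    and s2: "\<forall>i\<in>{1..n}. y i = -1 \<longrightarrow> Ap n W y i + Cz n W y i < Bm n W y i"
  shows "equilibrium n W 0 y"
  unfolding equilibrium_def
proof
  fix i assume i: "i \<in> {1..n}"
  have c1: "C_social n W i 1 y = 2 * Bm n W y i + Cz n W y i" using C_one[OF ov] .
  have c2: "C_social n W i (-1) y = 2 * Ap n W y i + Cz n W y i" using C_mone[OF ov] .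
  have c0: "C_social n W i 0 y = Ap n W y i + Bm n W y i" using C_zero[OF ov] .
  have cz: "Cz n W y i \<ge> 0" using Cz_nonneg[OF rs i] .
  have yi: "y i = 1 \<or> y i = -1 \<or> y i = 0" using ov i ov_def by auto
  show "P_set n W 0 i y = {y i}"
  proof
    show "{y i} \<subseteq> P_set n W 0 i y" using yi by (auto simp: P_set_def Opn_def)
  next
    show "P_set n W 0 i y \<subseteq> {y i}"
    proof
      fix z assume z: "z \<in> P_set n W 0 i y"
      then have zO: "z = -1 \<or> z = 0 \<or> z = 1" and cz': "C_social n W i z y \<le> C_social n W i (y i) y"
        and ab: "\<bar>z\<bar> \<le> \<bar>y i\<bar>"
        by (auto simp: P_set_def Opn_def)
      show "z \<in> {y i}"
      proof (cases "y i = 0")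
        case True then show ?thesis using ab by simp
      next
        case False
        then have "y i = 1 \<or> y i = -1" using yi by simp
        then show ?thesis
        proof
          assume y1: "y i = 1"
          have "Ap n W y i > Bm n W y i + Cz n W y i" using s1 i y1 by auto
          then show ?thesis using zO cz' c1 c2 c0 y1 cz by auto
        next
          assume y1: "y i = -1"
          have "Ap n W y i + Cz n W y i < Bm n W y i" using s2 i y1 by auto
          then show ?thesis using zO cz' c1 c2 c0 y1 cz by auto
        qed
      qed
    qed
  qed
qed

theorem lemma5:
  fixes n :: nat and W :: "nat \<Rightarrow> nat \<Rightarrow> real" and x0 :: "nat \<Rightarrow> int"
  assumes "n \<ge> 1"
    and "row_stochastic n W"
    and "\<forall>i\<in>{1..n}. x0 i \<in> Opn \<and> x0 i \<noteq> 0"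
  shows "\<exists>us. legal_seq n W 0 x0 us \<and>
           ((\<exists>z. z \<noteq> 0 \<and> (\<forall>i\<in>{1..n}. apply_seq x0 us i = z))
            \<or> (equilibrium n W 0 (apply_seq x0 us) \<and> \<not> consensus n (apply_seq x0 us)))"
proof -
  have pm0: "pm n x0" using assms(3) by (auto simp: pm_def Opn_def)
  obtain us1 where u1: "legal_seq n W 0 x0 us1" "pm n (apply_seq x0 us1)"
     "\<forall>i\<in>{1..n}. apply_seq x0 us1 i = 1 \<longrightarrow> Ap n W (apply_seq x0 us1) i > Bm n W (apply_seq x0 us1) i + Cz n W (apply_seq x0 us1) i"
    using phase1[OF assms(2) pm0] by blast
  define x1 where "x1 = apply_seq x0 us1"
  show ?thesis
  proof (cases "\<exists>k\<in>{1..n}. x1 k = 1")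
    case False
    then have "\<forall>i\<in>{1..n}. apply_seq x0 us1 i = -1" using u1(2) unfolding pm_def x1_def by auto
    then show ?thesis using u1(1) by (intro exI[of _ us1] conjI disjI1 exI[of _ "-1"]) auto
  next
    case True
    then obtain k where k: "k \<in> {1..n}" "x1 k = 1" by blast
    have ov1: "ov n x1" using u1(2) pm_ov x1_def by simp
    obtain us2 where u2: "legal_seq n W 0 x1 us2" "ov n (apply_seq x1 us2)"
       "\<forall>i\<in>{1..n}. x1 i = 1 \<longrightarrow> apply_seq x1 us2 i = 1"
       "\<forall>i\<in>{1..n}. apply_seq x1 us2 i = 1 \<longrightarrow> Ap n W (apply_seq x1 us2) i > Bm n W (apply_seq x1 us2) i + Cz n W (apply_seq x1 us2) i"
       "\<forall>i\<in>{1..n}. apply_seq x1 us2 i = -1 \<longrightarrow> Ap n W (apply_seq x1 us2) i + Cz n W (apply_seq x1 us2) i < Bm n W (apply_seq x1 us2) i"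
      using phase2[OF assms(2) ov1] u1(3) unfolding x1_def by blast
    define y where "y = apply_seq x0 (us1 @ us2)"
    have ly: "legal_seq n W 0 x0 (us1 @ us2)" using u1(1) u2(1) legal_append x1_def by auto
    have yd: "y = apply_seq x1 us2" using y_def apply_append x1_def by auto
    have eq: "equilibrium n W 0 y" using final_eq[OF assms(2) u2(2) u2(4) u2(5)] yd by simp
    have yk: "y k = 1" using u2(3) k yd by auto
    show ?thesis
    proof (cases "consensus n y")
      case True
      have "\<forall>i\<in>{1..n}. y i = 1" using True k yk unfolding consensus_def by metis
      then show ?thesis using ly y_def by (intro exI[of _ "us1 @ us2"] conjI disjI1 exI[of _ 1]) auto
    next
      case False
      then show ?thesis using ly eq y_def by blast
    qed
  qed
qed

end
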